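(* Let $N$ be a set of $n$ elements, $v:2^N\to\mathbb{R}_+$ a monotone submodular function with $v(\emptyset)=0$, and $r(S)=\sum_{i\in S}v(\{i\}\mid S\setminus\{i\})$. Let $s>0$ be such that $k=s\cdot H_n$ is a positive integer, where $H_n=\sum_{j=1}^n\frac1j$, and let $S_1,\dots,S_k$ be independent random sets, each sampled by: pick a size $m\in\{1,\dots,n\}$ with probability $(m H_n)^{-1}$, then pick a uniformly random subset of $N$ of size $m$. Then $$\Pr\Big[\max_{i}r(S_i)\ge\frac{v(N)}{2H_n}\Big]\ge1-e^{-s/2}.$$
   Context: Marginal value: $v(\{i\}\mid T)=v(T\cup\{i\})-v(T)$; submodular means $v(S\cup T)+v(S\cap T)\le v(S)+v(T)$ for all $S,T$. *)

theory Defs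
  imports "HOL-Probability.Probability"
begin

definition marginal :: "('a set \<Rightarrow> real) \<Rightarrow> 'a \<Rightarrow> 'a set \<Rightarrow> real" where
  "marginal v i T = v (T \<union> {i}) - v T"

definition rval :: "('a set \<Rightarrow> real) \<Rightarrow> 'a set \<Rightarrow> real" where
  "rval v S = (\<Sum>i\<in>S. marginal v i (S - {i}))"

definition monotone_fn :: "'a set \<Rightarrow> ('a set \<Rightarrow> real) \<Rightarrow> bool" where
  "monotone_fn N v \<longleftrightarrow> (\<forall>S T. S \<subseteq> T \<and> T \<subseteq> N \<longrightarrow> v S \<le> v T)"

definition submodular :: "'a set \<Rightarrow> ('a set \<Rightarrow> real) \<Rightarrow> bool" where
  "submodular N v \<longleftrightarrow>
     (\<forall>S T. S \<subseteq> N \<and> T \<subseteq> N \<longrightarrow> v (S \<union> T) + v (S \<inter> T) \<le> v S + v T)"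

definition size_pmf :: "nat \<Rightarrow> nat pmf" where
  "size_pmf n = embed_pmf (\<lambda>m. if m \<in> {1..n} then 1 / (real m * harm n) else 0)"

definition random_set_pmf :: "'a set \<Rightarrow> 'a set pmf" where
  "random_set_pmf N = do {
     m \<leftarrow> size_pmf (card N);
     pmf_of_set {S. S \<subseteq> N \<and> card S = m}
   }"

end

theory Submission imports Defs begin

lemma marg_sum_le:
  assumes sub: "submodular N v" and fin: "finite S" and "S \<subseteq> T" and "T \<subseteq> N"
  shows "(\<Sum>i\<in>S. v T - v (T - {i})) \<le> v T - v (T - S)"
  using fin assms(3)
proof (induction S rule: finite_induct)
  case empty then show ?case by simp
next
  case (insert x S)
  have xT: "x \<in> T" using insert by auto
  have "v ((T - {x}) \<union> (T - S)) + v ((T - {x}) \<inter> (T - S)) \<le> v (T - {x}) + v (T - S)"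
  proof -
    have "T - {x} \<subseteq> N" "T - S \<subseteq> N" using assms(4) by auto
    then show ?thesis using sub unfolding submodular_def by simp
  qed
  moreover have "(T - {x}) \<union> (T - S) = T" using insert xT by auto
  moreover have "(T - {x}) \<inter> (T - S) = T - insert x S" by auto
  ultimately have "v T - v (T - {x}) \<le> v (T - S) - v (T - insert x S)" by simp
  moreover have "(\<Sum>i\<in>insert x S. v T - v (T - {i})) = (v T - v (T - {x})) + (\<Sum>i\<in>S. v T - v (T - {i}))"
    using insert(1,2) by (rule sum.insert)
  moreover have "(\<Sum>i\<in>S. v T - v (T - {i})) \<le> v T - v (T - S)" using insert by auto
  ultimately show ?case by linarith
qed

lemma rval_alt:
  assumes "S \<subseteq> N"
  shows "rval v S = (\<Sum>i\<in>S. v S - v (S - {i}))"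
  unfolding rval_def marginal_def
  by (intro sum.cong refl) (metis Un_insert_right insert_Diff sup_bot.right_neutral)

lemma rval_le:
  assumes sub: "submodular N v" and mono: "monotone_fn N v" and "finite N" and "S \<subseteq> N" and "v {} = 0"
  shows "rval v S \<le> v N"
proof -
  have fS: "finite S" using assms finite_subset by blast
  have "rval v S \<le> v S - v (S - S)"
    using marg_sum_le[OF sub fS order.refl assms(4)] rval_alt[OF assms(4)] by simp
  also have "\<dots> \<le> v N" using mono assms unfolding monotone_fn_def by auto
  finally show ?thesis .
qed

lemma rval_nonneg:
  assumes mono: "monotone_fn N v" and "S \<subseteq> N"
  shows "rval v S \<ge> 0"
  unfolding rval_alt[OF assms(2)]
  using mono assms(2) unfolding monotone_fn_def
  by (intro sum_nonneg) auto

lemma count_swap: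
  assumes fin: "finite N" 
  shows "(\<Sum>S\<in>{S. S \<subseteq> N \<and> card S = Suc j}. \<Sum>i\<in>S. g (S - {i}))
       = (\<Sum>T\<in>{S. S \<subseteq> N \<and> card S = j}. real (card N - j) * g T)"
proof -
  let ?F = "\<lambda>j. {S. S \<subseteq> N \<and> card S = j}"
  have finF: "finite (?F j)" for j by (rule finite_subset[of _ "Pow N"]) (auto simp: fin)
  have finS: "S \<in> ?F j \<Longrightarrow> finite S" for S j using finite_subset[OF _ fin] by auto
  have e1: "(\<Sum>S\<in>?F (Suc j). \<Sum>i\<in>S. g (S - {i})) = (\<Sum>(S,i)\<in>Sigma (?F (Suc j)) (\<lambda>S. S). g (S - {i}))"
  proof -
    have "\<forall>S\<in>?F (Suc j). finite S" using finS by auto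
    then show ?thesis by (rule sum.Sigma[OF finF])
  qed
  have h1: "(S - {i}, i) \<in> Sigma (?F j) (\<lambda>T. N - T) \<and> insert i (S - {i}) = S"
    if "(S, i) \<in> Sigma (?F (Suc j)) (\<lambda>S. S)" for S i
  proof -
    from that have a: "S \<subseteq> N" "card S = Suc j" "i \<in> S" by auto
    have fS: "finite S" using a(1) finite_subset[OF _ fin] by simp
    have "card (S - {i}) = j" using a(2,3) fS by simp
    then show ?thesis using a by auto
  qed
  have h2: "(insert i T, i) \<in> Sigma (?F (Suc j)) (\<lambda>S. S) \<and> insert i T - {i} = T"
    if "(T, i) \<in> Sigma (?F j) (\<lambda>T. N - T)" for T i
  proof -
    from that have a: "T \<subseteq> N" "card T = j" "i \<in> N" "i \<notin> T" by auto
    have fT: "finite T" using a(1) finite_subset[OF _ fin] by simp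
    then show ?thesis using a by auto
  qed
  have e2: "(\<Sum>(S,i)\<in>Sigma (?F (Suc j)) (\<lambda>S. S). g (S - {i})) = (\<Sum>(T,i)\<in>Sigma (?F j) (\<lambda>T. N - T). g T)"
    apply (rule sum.reindex_bij_witness[where i="\<lambda>(T,i). (insert i T, i)" and j="\<lambda>(S,i). (S - {i}, i)"])
    using h1 h2 by auto
  have "(\<Sum>S\<in>?F (Suc j). \<Sum>i\<in>S. g (S - {i})) = (\<Sum>(T,i)\<in>Sigma (?F j) (\<lambda>T. N - T). g T)"
    using e1 e2 by simp
  also have "\<dots> = (\<Sum>T\<in>?F j. \<Sum>i\<in>N - T. g T)"
    using finF fin by (subst sum.Sigma) simp_all
  also have "\<dots> = (\<Sum>T\<in>?F j. real (card N - j) * g T)"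
  proof (intro sum.cong refl)
    fix T assume "T \<in> ?F j"
    then have "T \<subseteq> N" "card T = j" by auto
    then have "card (N - T) = card N - j" using fin by (simp add: card_Diff_subset finite_subset)
    then show "(\<Sum>i\<in>N - T. g T) = real (card N - j) * g T" by simp
  qed
  finally show ?thesis .
qed

lemma pmf_size:
  assumes "n > 0"
  shows "pmf (size_pmf n) m = (if m \<in> {1..n} then 1 / (real m * harm n) else 0)"
proof -
  have H: "harm n > (0::real)" using harm_pos assms by blast
  have sum1: "(\<Sum>m\<in>{1..n}. 1 / (real m * harm n)) = 1"
  proof -
    have "(\<Sum>m\<in>{1..n}. 1 / (real m * harm n)) = (\<Sum>m\<in>{1..n}. inverse (real m)) / harm n"
      by (simp add: sum_divide_distrib field_simps)
    also have "\<dots> = 1" using H by (simp add: harm_def)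
    finally show ?thesis .
  qed
  let ?f = "\<lambda>m. if m \<in> {1..n} then 1 / (real m * harm n) else 0"
  have nn: "\<And>m. 0 \<le> ?f m" using H by (auto intro!: mult_nonneg_nonneg less_imp_le)
  have "(\<integral>\<^sup>+x. ennreal (?f x) \<partial>count_space UNIV) = (\<Sum>x\<in>{1..n}. ennreal (?f x))"
    by (rule nn_integral_count_space') auto
  also have "\<dots> = ennreal (\<Sum>x\<in>{1..n}. ?f x)" using nn H by (subst sum_ennreal) (auto intro!: mult_nonneg_nonneg less_imp_le)
  also have "(\<Sum>x\<in>{1..n}. ?f x) = 1" using sum1 by simp
  finally have "(\<integral>\<^sup>+x. ennreal (?f x) \<partial>count_space UNIV) = 1" by simp
  then show ?thesis unfolding size_pmf_def using nn by (subst pmf_embed_pmf) auto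
qed

lemma set_size_pmf:
  assumes "n > 0" shows "set_pmf (size_pmf n) \<subseteq> {1..n}"
  using pmf_size[OF assms] by (auto simp: set_pmf_eq)

lemma F_props:
  assumes "finite N" "j \<le> card N"
  shows "finite {S. S \<subseteq> N \<and> card S = j}" "{S. S \<subseteq> N \<and> card S = j} \<noteq> {}"
proof -
  show "finite {S. S \<subseteq> N \<and> card S = j}" by (rule finite_subset[of _ "Pow N"]) (auto simp: assms)
  obtain T where "T \<subseteq> N" "card T = j" using obtain_subset_with_card_n[OF assms(2)] by metis
  then show "{S. S \<subseteq> N \<and> card S = j} \<noteq> {}" by auto
qed

definition avgv :: "'a set \<Rightarrow> ('a set \<Rightarrow> real) \<Rightarrow> nat \<Rightarrow> real" where
  "avgv N v j = (\<Sum>T\<in>{S. S \<subseteq> N \<and> card S = j}. v T) / real (card N choose j)"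

lemma aux: fixes m d x y c0 c1 :: real
  assumes "c1 > 0" "c0 > 0" "m * c1 = d * c0"
  shows "(m*x - d*y)/c1 = m*(x/c1 - y/c0)"
proof -
  have "d = m * c1 / c0" using assms by (simp add: field_simps)
  then show ?thesis using assms by (simp add: field_simps)
qed

lemma exp_layer:
  assumes fin: "finite N" and j: "Suc j \<le> card N"
  shows "measure_pmf.expectation (pmf_of_set {S. S \<subseteq> N \<and> card S = Suc j}) (rval v)
         = real (Suc j) * (avgv N v (Suc j) - avgv N v j)"
proof -
  let ?F = "\<lambda>j. {S. S \<subseteq> N \<and> card S = j}"
  let ?n = "card N"
  have c1: "card (?F (Suc j)) = ?n choose Suc j" using n_subsets[OF fin] .
  have bpos: "(?n choose Suc j) > 0" "(?n choose j) > 0" using j by auto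
  have bid: "real (Suc j) * real (?n choose Suc j) = real (?n - j) * real (?n choose j)"
  proof -
    have "Suc j * (?n choose Suc j) = (?n - j) * (?n choose j)"
      using binomial_absorption[of j ?n] binomial_absorb_comp[of ?n j] by simp
    then show ?thesis by (metis of_nat_mult)
  qed
  have "(\<Sum>S\<in>?F (Suc j). rval v S) = (\<Sum>S\<in>?F (Suc j). real (Suc j) * v S - (\<Sum>i\<in>S. v (S - {i})))"
    by (intro sum.cong refl) (auto simp: rval_alt sum_subtractf)
  also have "\<dots> = real (Suc j) * (\<Sum>S\<in>?F (Suc j). v S) - (\<Sum>S\<in>?F (Suc j). \<Sum>i\<in>S. v (S - {i}))"
    by (simp add: sum_subtractf sum_distrib_left)
  also have "\<dots> = real (Suc j) * (\<Sum>S\<in>?F (Suc j). v S) - real (?n - j) * (\<Sum>S\<in>?F j. v S)"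
    by (simp add: count_swap[OF fin] sum_distrib_left)
  finally have sr: "(\<Sum>S\<in>?F (Suc j). rval v S) = real (Suc j) * (\<Sum>S\<in>?F (Suc j). v S) - real (?n - j) * (\<Sum>S\<in>?F j. v S)" .
  have "measure_pmf.expectation (pmf_of_set (?F (Suc j))) (rval v) = (\<Sum>S\<in>?F (Suc j). rval v S) / real (?n choose Suc j)"
    using F_props[OF fin j] c1 by (subst integral_pmf_of_set) auto
  also have "\<dots> = real (Suc j) * (avgv N v (Suc j) - avgv N v j)"
    unfolding sr avgv_def by (rule aux) (use bpos bid in auto)
  finally show ?thesis .
qed

lemma tele: fixes n :: nat shows "(\<Sum>m\<in>{1..n}. (f m - f (m - 1) :: real)) = f n - f 0"
  by (induction n) (auto simp: sum.cl_ivl_Suc)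

lemma set_random:
  assumes "finite N" "card N > 0"
  shows "set_pmf (random_set_pmf N) \<subseteq> Pow N"
proof
  fix S assume "S \<in> set_pmf (random_set_pmf N)"
  then obtain m where m: "m \<in> set_pmf (size_pmf (card N))"
    and S: "S \<in> set_pmf (pmf_of_set {S. S \<subseteq> N \<and> card S = m})"
    unfolding random_set_pmf_def by auto
  have "m \<le> card N" using m set_size_pmf[OF assms(2)] by auto
  then have "set_pmf (pmf_of_set {S. S \<subseteq> N \<and> card S = m}) = {S. S \<subseteq> N \<and> card S = m}"
    using F_props[OF assms(1)] by (intro set_pmf_of_set) auto
  then show "S \<in> Pow N" using S by auto
qed

lemma avg_n: assumes "finite N" shows "avgv N v (card N) = v N"
proof -
  have "{S. S \<subseteq> N \<and> card S = card N} = {N}"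
    using assms card_subset_eq by (auto intro: card_subset_eq)
  then show ?thesis unfolding avgv_def by simp
qed

lemma avg_0: assumes "finite N" "v {} = 0" shows "avgv N v 0 = 0"
proof -
  have "{S. S \<subseteq> N \<and> card S = 0} = {{}}"
    using assms by (auto dest: finite_subset)
  then show ?thesis unfolding avgv_def using assms by simp
qed

lemma aux2: fixes a h x :: real assumes "a > 0" shows "1/(a*h)*(a*x) = x/h"
  using assms by simp

lemma expect_rval:
  assumes fin: "finite N" and n: "card N > 0" and v0: "v {} = 0"
  shows "measure_pmf.expectation (random_set_pmf N) (rval v) = v N / harm (card N)"
proof -
  let ?n = "card N"
  have H: "harm ?n > (0::real)" using harm_pos n by blast
  have "measure_pmf.expectation (random_set_pmf N) (rval v)
     = (\<Sum>m\<in>{1..?n}. pmf (size_pmf ?n) m *\<^sub>R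
          measure_pmf.expectation (pmf_of_set {S. S \<subseteq> N \<and> card S = m}) (rval v))"
    unfolding random_set_pmf_def
  proof (rule pmf_expectation_bind)
    fix m assume "m \<in> {1..?n}"
    then have "set_pmf (pmf_of_set {S. S \<subseteq> N \<and> card S = m}) = {S. S \<subseteq> N \<and> card S = m}"
      using F_props[OF fin] by (intro set_pmf_of_set) auto
    then show "finite (set_pmf (pmf_of_set {S. S \<subseteq> N \<and> card S = m}))"
      using F_props[OF fin] \<open>m \<in> {1..?n}\<close> by auto
  qed (use set_size_pmf[OF n] in auto)
  also have "\<dots> = (\<Sum>m\<in>{1..?n}. (avgv N v m - avgv N v (m - 1)) / harm ?n)"
  proof (intro sum.cong refl)
    fix m assume m: "m \<in> {1..?n}"
    then obtain j where j: "m = Suc j" "Suc j \<le> ?n" by (cases m) auto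
    show "pmf (size_pmf ?n) m *\<^sub>R measure_pmf.expectation (pmf_of_set {S. S \<subseteq> N \<and> card S = m}) (rval v)
          = (avgv N v m - avgv N v (m - 1)) / harm ?n"
    proof -
      have e: "measure_pmf.expectation (pmf_of_set {S. S \<subseteq> N \<and> card S = Suc j}) (rval v)
             = real (Suc j) * (avgv N v (Suc j) - avgv N v j)" using exp_layer[OF fin j(2)] .
      have p: "pmf (size_pmf ?n) (Suc j) = 1 / (real (Suc j) * harm ?n)"
        using pmf_size[OF n, of "Suc j"] j by simp
      have "pmf (size_pmf ?n) (Suc j) *\<^sub>R measure_pmf.expectation (pmf_of_set {S. S \<subseteq> N \<and> card S = Suc j}) (rval v)
          = 1 / (real (Suc j) * harm ?n) * (real (Suc j) * (avgv N v (Suc j) - avgv N v j))"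
        unfolding e p by simp
      also have "\<dots> = (avgv N v (Suc j) - avgv N v j) / harm ?n"
        by (rule aux2) simp
      finally show ?thesis unfolding j(1) by simp
    qed
  qed
  also have "\<dots> = (\<Sum>m\<in>{1..?n}. avgv N v m - avgv N v (m - 1)) / harm ?n"
    by (simp add: sum_divide_distrib)
  also have "\<dots> = v N / harm ?n"
    by (subst tele) (simp add: avg_n[OF fin] avg_0[of N v, OF fin v0])
  finally show ?thesis .
qed

lemma q_bound:
  fixes q a w :: real
  assumes "0 < a" "a \<le> 1/2" "w > 0" "2*a*w \<le> w - (w - a*w) * q"
  shows "q \<le> 1 - a"
proof -
  have "w * (2*a) \<le> w * (1 - (1-a)*q)" using assms(4) by (simp add: algebra_simps)
  then have h: "2*a \<le> 1 - (1-a)*q" using assms(3) by (simp add: mult_le_cancel_left_pos)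
  have "(1-a)*(1-a) = 1 - 2*a + a*a" by (simp add: algebra_simps)
  moreover have "a*a \<ge> 0" by simp
  ultimately have "(1-a)*q \<le> (1-a)*(1-a)" using h by linarith
  moreover have "1 - a > 0" using assms(2) by simp
  ultimately show ?thesis by (simp add: mult_le_cancel_left_pos)
qed

theorem mainTheorem17:
  fixes N :: "'a set" and v :: "'a set \<Rightarrow> real" and s :: real and k :: nat
  assumes "finite N"
    and "\<forall>S. S \<subseteq> N \<longrightarrow> v S \<ge> 0"
    and "monotone_fn N v"
    and "submodular N v"
    and "v {} = 0"
    and "s > 0"
    and "k > 0"
    and "real k = s * harm (card N)"
  shows "measure_pmf.prob (Pi_pmf {..<k} {} (\<lambda>_. random_set_pmf N))
           {f. \<exists>i<k. rval v (f i) \<ge> v N / (2 * harm (card N))}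
         \<ge> 1 - exp (- s / 2)"
proof -
  note fin = assms(1)
  let ?n = "card N"
  define H :: real where "H = harm ?n"
  have n: "?n > 0"
  proof (rule ccontr)
    assume "\<not> ?n > 0" then have "?n = 0" by simp
    then have "real k = 0" using assms(8) by (simp add: harm_def)
    then show False using assms(7) by simp
  qed
  have H1: "H \<ge> 1"
  proof -
    have "harm 1 \<le> (harm ?n :: real)" using n by (intro harm_mono) simp
    then show ?thesis unfolding H_def by (simp add: harm_def)
  qed
  define P where "P = random_set_pmf N"
  define c where "c = v N / (2 * H)"
  define B where "B = {S. rval v S < c}"
  define q where "q = measure_pmf.prob P B"
  define a where "a = 1 / (2 * H)"
  have a: "0 < a" "a \<le> 1/2" using H1 unfolding a_def by auto
  have vN: "v N \<ge> 0" using assms(2) by simp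
  have setP: "set_pmf P \<subseteq> Pow N" unfolding P_def using set_random[OF fin n] .
  have finP: "finite (Pow N)" using fin by simp
  have E: "measure_pmf.expectation P (rval v) = v N / H"
    unfolding P_def H_def using expect_rval[of N v, OF fin n assms(5)] .
  have E2: "measure_pmf.expectation P (rval v) = (\<Sum>S\<in>Pow N. pmf P S * rval v S)"
    using setP by (subst integral_measure_pmf[OF finP]) auto
  have q2: "q = (\<Sum>S\<in>{S\<in>Pow N. S \<in> B}. pmf P S)"
  proof -
    have "q = measure_pmf.prob P (B \<inter> set_pmf P)" unfolding q_def by (simp add: measure_Int_set_pmf)
    also have "B \<inter> set_pmf P = {S\<in>Pow N. S \<in> B} \<inter> set_pmf P" using setP by auto
    also have "measure_pmf.prob P \<dots> = measure_pmf.prob P {S\<in>Pow N. S \<in> B}" by (simp add: measure_Int_set_pmf)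
    also have "\<dots> = (\<Sum>S\<in>{S\<in>Pow N. S \<in> B}. pmf P S)" using finP by (simp add: measure_measure_pmf_finite)
    finally show ?thesis .
  qed
  have sum1: "(\<Sum>S\<in>Pow N. pmf P S) = 1" using sum_pmf_eq_1[OF finP setP] .
  have q_le: "q \<le> 1 - a"
  proof (cases "v N = 0")
    case True
    have emp: "{S\<in>Pow N. S \<in> B} = {}"
    proof (rule ccontr)
      assume "{S\<in>Pow N. S \<in> B} \<noteq> {}"
      then obtain S where "S \<subseteq> N" "rval v S < c" unfolding B_def by auto
      moreover have "c = 0" unfolding c_def using True by simp
      ultimately show False using rval_nonneg[OF assms(3), of S] by simp
    qed
    have "q = 0" unfolding q2 emp by simp
    then show ?thesis using a by simp
  next
    case False
    then have vpos: "v N > 0" using vN by simp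
    have "(\<Sum>S\<in>Pow N. pmf P S * rval v S) \<le> (\<Sum>S\<in>Pow N. pmf P S * v N - (if S \<in> B then pmf P S * (v N - c) else 0))"
    proof (rule sum_mono)
      fix S assume S: "S \<in> Pow N"
      have le: "rval v S \<le> v N" using rval_le[OF assms(4) assms(3) fin _ assms(5)] S by simp
      show "pmf P S * rval v S \<le> pmf P S * v N - (if S \<in> B then pmf P S * (v N - c) else 0)"
      proof (cases "S \<in> B")
        case True
        then have "rval v S \<le> c" unfolding B_def by simp
        then have "pmf P S * rval v S \<le> pmf P S * c" by (simp add: mult_left_mono)
        then show ?thesis using True by (simp add: algebra_simps)
      next
        case False
        then show ?thesis using le by (simp add: mult_left_mono)
      qed
    qed
    also have "\<dots> = v N * (\<Sum>S\<in>Pow N. pmf P S) - (v N - c) * (\<Sum>S\<in>{S\<in>Pow N. S \<in> B}. pmf P S)"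
    proof -
      have "(\<Sum>S\<in>Pow N. pmf P S * v N - (if S \<in> B then pmf P S * (v N - c) else 0))
         = (\<Sum>S\<in>Pow N. pmf P S * v N) - (\<Sum>S\<in>Pow N. (if S \<in> B then pmf P S * (v N - c) else 0))"
        by (rule sum_subtractf)
      also have "(\<Sum>S\<in>Pow N. pmf P S * v N) = v N * (\<Sum>S\<in>Pow N. pmf P S)"
        by (subst sum_distrib_left) (simp add: mult.commute)
      also have "(\<Sum>S\<in>Pow N. (if S \<in> B then pmf P S * (v N - c) else 0)) = (\<Sum>S\<in>{S\<in>Pow N. S \<in> B}. pmf P S * (v N - c))"
        by (rule sum.inter_filter[OF finP, symmetric])
      also have "\<dots> = (v N - c) * (\<Sum>S\<in>{S\<in>Pow N. S \<in> B}. pmf P S)"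
        by (subst sum_distrib_left) (simp add: mult.commute)
      finally show ?thesis .
    qed
    also have "\<dots> = v N - (v N - c) * q" using sum1 q2 by simp
    finally have "v N / H \<le> v N - (v N - c) * q" using E E2 by simp
    moreover have "v N / H = 2 * a * v N" "c = a * v N" unfolding a_def c_def by auto
    ultimately have "2 * a * v N \<le> v N - (v N - a * v N) * q" by simp
    then show ?thesis using q_bound[OF a vpos] by simp
  qed
  have q0: "q \<ge> 0" unfolding q_def by simp
  have ev: "{f. \<exists>i<k. rval v (f i) \<ge> v N / (2 * harm (card N))} = space (measure_pmf (Pi_pmf {..<k} {} (\<lambda>_. P))) - Pi {..<k} (\<lambda>_. B)"
    unfolding B_def c_def H_def by (auto simp: Pi_def not_less)
  have "measure_pmf.prob (Pi_pmf {..<k} {} (\<lambda>_. P)) (Pi {..<k} (\<lambda>_. B)) = q ^ k"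
    by (subst measure_Pi_pmf_Pi) (simp_all add: q_def)
  then have pr: "measure_pmf.prob (Pi_pmf {..<k} {} (\<lambda>_. P)) {f. \<exists>i<k. rval v (f i) \<ge> v N / (2 * harm (card N))} = 1 - q ^ k"
    unfolding ev by (subst measure_pmf.prob_compl) auto
  have "q ^ k \<le> (1 - a) ^ k" using q0 q_le by (intro power_mono) auto
  also have "\<dots> \<le> exp (- a) ^ k" using a by (intro power_mono) (auto simp: exp_ge_add_one_self[of "-a", simplified])
  also have "\<dots> = exp (real k * (- a))" by (rule exp_of_nat_mult[symmetric])
  also have "real k * (- a) = - s / 2" unfolding a_def H_def using assms(8) H1 unfolding H_def by (simp add: field_simps)
  finally have "q ^ k \<le> exp (- s / 2)" .
  then show ?thesis using pr unfolding P_def by simp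
qed

end
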